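(* Let $n\ge1$, $\gamma\ge0$, let $A$ be a disk in $\mathbb{R}^2$ of radius $n^\gamma$, and let $z>0$ with $z\le n^\gamma$. Let $Q$ be a convex cell of a partition of $A$ into convex cells each of diameter at most $z$. Let $s,d$ be independent uniformly distributed points in $A$. Then the probability that the line segment from $s$ to $d$ intersects $Q$ is at most $6\,\frac{z}{n^\gamma}$. *)

theory Defs
  imports "HOL-Analysis.Analysis"
begin

definition unif_pair :: "(real^2) set \<Rightarrow> ((real^2) \<times> (real^2)) measure" where
  "unif_pair A = uniform_measure lborel A \<Otimes>\<^sub>M uniform_measure lborel A"

end

theory Submission
  imports Defs "HOL-Probability.Probability"
begin


definition rot :: "real \<Rightarrow> real \<Rightarrow> real^2 \<Rightarrow> real^2" where
  "rot e1 e2 y = vector [y$1*e1 - y$2*e2, y$1*e2 + y$2*e1]"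

lemma rot_orth:
  assumes "e1^2 + e2^2 = 1"
  shows "orthogonal_transformation (rot e1 e2)"
proof -
  have lin: "linear (rot e1 e2)"
    by (intro linearI) (auto simp: rot_def vec_eq_iff forall_2 algebra_simps)
  have "rot e1 e2 v \<bullet> rot e1 e2 w = v \<bullet> w" for v w
  proof -
    have "rot e1 e2 v \<bullet> rot e1 e2 w = (v$1*e1 - v$2*e2)*(w$1*e1 - w$2*e2) + (v$1*e2 + v$2*e1)*(w$1*e2 + w$2*e1)"
      by (simp add: rot_def inner_vec_def sum_2)
    also have "\<dots> = (v$1*w$1 + v$2*w$2) * (e1^2+e2^2)"
      by (simp add: algebra_simps power2_eq_square)
    finally show ?thesis using assms by (simp add: inner_vec_def sum_2)
  qed
  then show ?thesis using lin by (simp add: orthogonal_transformation_def)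
qed

definition rect :: "real^2 \<Rightarrow> real \<Rightarrow> real \<Rightarrow> real \<Rightarrow> real \<Rightarrow> real \<Rightarrow> (real^2) set" where
  "rect s e1 e2 a b h = {d. a \<le> (d$1-s$1)*e1 + (d$2-s$2)*e2 \<and> (d$1-s$1)*e1 + (d$2-s$2)*e2 \<le> b
      \<and> \<bar>(d$2-s$2)*e1 - (d$1-s$1)*e2\<bar> \<le> h}"

lemma rect_eq:
  assumes "e1^2 + e2^2 = 1"
  shows "rect s e1 e2 a b h = (\<lambda>y. s + y) ` (rot e1 e2 ` cbox (vector [a, -h]) (vector [b, h]))"
proof (intro set_eqI iffI)
  fix d assume d: "d \<in> rect s e1 e2 a b h"
  define y :: "real^2" where "y = vector [(d$1-s$1)*e1 + (d$2-s$2)*e2, (d$2-s$2)*e1 - (d$1-s$1)*e2]"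
  have "rot e1 e2 y = d - s"
  proof -
    have "((d$1-s$1)*e1 + (d$2-s$2)*e2)*e1 - ((d$2-s$2)*e1 - (d$1-s$1)*e2)*e2 = (d$1-s$1)*(e1^2+e2^2)"
      "((d$1-s$1)*e1 + (d$2-s$2)*e2)*e2 + ((d$2-s$2)*e1 - (d$1-s$1)*e2)*e1 = (d$2-s$2)*(e1^2+e2^2)"
      by (simp_all add: algebra_simps power2_eq_square)
    then show ?thesis using assms by (simp add: rot_def y_def vec_eq_iff forall_2)
  qed
  moreover have "y \<in> cbox (vector [a, -h]) (vector [b, h])"
    using d by (simp add: rect_def y_def mem_box_cart forall_2 abs_le_iff)
  ultimately show "d \<in> (\<lambda>y. s + y) ` (rot e1 e2 ` cbox (vector [a, -h]) (vector [b, h]))"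
    by (metis (no_types, lifting) add.commute diff_add_cancel image_eqI)
next
  fix d assume "d \<in> (\<lambda>y. s + y) ` (rot e1 e2 ` cbox (vector [a, -h]) (vector [b, h]))"
  then obtain y where y: "y \<in> cbox (vector [a, -h]) (vector [b, h])" and d: "d = s + rot e1 e2 y" by auto
  have "(d$1-s$1)*e1 + (d$2-s$2)*e2 = y$1 * (e1^2+e2^2)"
       "(d$2-s$2)*e1 - (d$1-s$1)*e2 = y$2 * (e1^2+e2^2)"
    by (simp_all add: d rot_def algebra_simps power2_eq_square)
  then show "d \<in> rect s e1 e2 a b h"
    using y assms by (simp add: rect_def mem_box_cart forall_2 abs_le_iff)
qed

lemma rect_measure:
  assumes "e1^2 + e2^2 = 1" "a \<le> b" "0 \<le> h"
  shows "rect s e1 e2 a b h \<in> sets lborel"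
    and "emeasure lborel (rect s e1 e2 a b h) = ennreal ((b - a) * (2*h))"
proof -
  let ?B = "cbox (vector [a, -h]) (vector [b, h]) :: (real^2) set"
  have ot: "orthogonal_transformation (rot e1 e2)" by (rule rot_orth[OF assms(1)])
  have bl: "bounded_linear (rot e1 e2)"
    using ot orthogonal_transformation_linear linear_conv_bounded_linear by blast
  have cont: "continuous_on UNIV (\<lambda>y. s + rot e1 e2 y)"
    by (intro continuous_on_add continuous_on_const linear_continuous_on[OF bl])
  have "compact ((\<lambda>y. s + y) ` (rot e1 e2 ` ?B))"
    unfolding image_image using cont
    by (intro compact_continuous_image) (auto intro: continuous_on_subset)
  then have cl: "closed (rect s e1 e2 a b h)" using rect_eq[OF assms(1)] by (simp add: compact_imp_closed)
  then show S: "rect s e1 e2 a b h \<in> sets lborel" by simp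
  have "measure lebesgue (rect s e1 e2 a b h) = measure lebesgue (rot e1 e2 ` ?B)"
    by (simp add: rect_eq[OF assms(1)] measure_translation)
  also have "\<dots> = measure lebesgue ?B"
    by (rule measure_orthogonal_image[OF ot]) simp
  also have "\<dots> = (b - a) * (2*h)"
  proof -
    have "vector [a, -h] \<in> ?B" using assms by (simp add: mem_box_cart forall_2)
    then have "?B \<noteq> {}" by blast
    then show ?thesis by (simp add: content_cbox_cart UNIV_2)
  qed
  finally have m: "measure lebesgue (rect s e1 e2 a b h) = (b - a) * (2*h)" .
  have "emeasure lborel (rect s e1 e2 a b h) = emeasure lebesgue (rect s e1 e2 a b h)"
    using S by simp
  also have "\<dots> = ennreal (measure lebesgue (rect s e1 e2 a b h))"
  proof (rule emeasure_eq_ennreal_measure)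
    have "bounded (rect s e1 e2 a b h)"
      using compact_imp_bounded[OF \<open>compact _\<close>] rect_eq[OF assms(1)] by simp
    then have "emeasure lborel (rect s e1 e2 a b h) < \<infinity>" by (rule emeasure_bounded_finite)
    then show "emeasure lebesgue (rect s e1 e2 a b h) \<noteq> \<top>" using S by simp
  qed
  finally show "emeasure lborel (rect s e1 e2 a b h) = ennreal ((b - a) * (2*h))" using m by simp
qed



definition dir1 :: "real^2 \<Rightarrow> real^2 \<Rightarrow> real" where
  "dir1 q s = (if q = s then 1 else (q-s)$1 / norm (q-s))"
definition dir2 :: "real^2 \<Rightarrow> real^2 \<Rightarrow> real" where
  "dir2 q s = (if q = s then 0 else (q-s)$2 / norm (q-s))"

lemma norm2_cart: "(norm (x::real^2))^2 = x$1^2 + x$2^2"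
proof -
  have "x \<bullet> x = x$1^2 + x$2^2" by (simp add: inner_vec_def sum_2 power2_eq_square)
  then show ?thesis by (simp add: dot_square_norm)
qed

lemma dir_norm: "(dir1 q s)^2 + (dir2 q s)^2 = 1"
proof (cases "q = s")
  case False
  then have n0: "norm (q - s) \<noteq> 0" by simp
  have "(dir1 q s)^2 + (dir2 q s)^2 = ((q-s)$1^2 + (q-s)$2^2) / (norm (q-s))^2"
    using False by (simp add: dir1_def dir2_def power_divide add_divide_distrib del: vector_minus_component)
  also have "\<dots> = 1"
  proof -
    have h: "(q-s)$1^2 + (q-s)$2^2 = (norm (q-s))^2" by (rule norm2_cart[symmetric])
    have "(norm (q-s))^2 \<noteq> 0" by (rule power_not_zero[OF n0])
    then show ?thesis unfolding h by (rule divide_self)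
  qed
  finally show ?thesis .
qed (simp add: dir1_def dir2_def)

lemma dir_eq: "q - s = norm (q - s) *\<^sub>R vector [dir1 q s, dir2 q s]"
  by (cases "q = s") (auto simp: dir1_def dir2_def vec_eq_iff forall_2)

lemma slice_sub:
  fixes s d q c :: "real^2"
  assumes "dist c s \<le> R" "dist c d \<le> R" "1/2 \<le> t" "t \<le> 1"
    and "dist q ((1-t) *\<^sub>R s + t *\<^sub>R d) \<le> z"
  shows "d \<in> rect s (dir1 q s) (dir2 q s) (-2*z) (2*R) (2*z)"
proof -
  define e1 where "e1 = dir1 q s"
  define e2 where "e2 = dir2 q s"
  define E :: "real^2" where "E = vector [e1, e2]"
  define Ep :: "real^2" where "Ep = vector [-e2, e1]"
  define r where "r = norm (q - s)"
  define m where "m = (1-t) *\<^sub>R s + t *\<^sub>R d"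
  define w where "w = m - q"
  have hE: "(norm E)^2 = 1" using norm2_cart[of E] dir_norm[of q s]
    by (simp add: E_def e1_def e2_def)
  have nE: "norm E = 1" using hE norm_ge_zero[of E] by (simp add: power2_eq_1_iff)
  have hEp: "(norm Ep)^2 = 1" using norm2_cart[of Ep] dir_norm[of q s]
    by (simp add: Ep_def e1_def e2_def add.commute)
  have nEp: "norm Ep = 1" using hEp norm_ge_zero[of Ep] by (simp add: power2_eq_1_iff)
  have qs: "q - s = r *\<^sub>R E" using dir_eq[of q s] by (simp add: r_def E_def e1_def e2_def)
  have nw: "norm w \<le> z" using assms(5) by (simp add: w_def m_def dist_norm norm_minus_commute)
  have tpos: "t > 0" using assms(3) by simp
  have ds: "d - s = (1/t) *\<^sub>R (m - s)"
    using tpos by (simp add: m_def algebra_simps)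
  also have "m - s = r *\<^sub>R E + w" using qs by (simp add: w_def algebra_simps)
  finally have ds: "d - s = (1/t) *\<^sub>R (r *\<^sub>R E + w)" .
  have EE: "E \<bullet> E = 1" using nE by (simp add: dot_square_norm)
  have EEp: "E \<bullet> Ep = 0" by (simp add: E_def Ep_def inner_vec_def sum_2)
  have wE: "\<bar>w \<bullet> E\<bar> \<le> z" using Cauchy_Schwarz_ineq2[of w E] nE nw by simp
  have wEp: "\<bar>w \<bullet> Ep\<bar> \<le> z" using Cauchy_Schwarz_ineq2[of w Ep] nEp nw by simp
  have r0: "r \<ge> 0" by (simp add: r_def)
  have it: "1 \<le> 1/t" "1/t \<le> 2" using assms(3,4) tpos by (simp_all add: field_simps)
  have p1: "(d - s) \<bullet> E = (1/t) * (r + w \<bullet> E)"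
    using EE by (simp add: ds inner_add_left)
  have p2: "(d - s) \<bullet> Ep = (1/t) * (w \<bullet> Ep)"
    using EEp by (simp add: ds inner_add_left)
  have ndiff: "norm (d - s) \<le> 2*R"
    using assms(1,2) dist_triangle[of s d c] by (simp add: dist_norm norm_minus_commute dist_commute)
  have "(d - s) \<bullet> E \<le> 2*R" using Cauchy_Schwarz_ineq2[of "d - s" E] nE ndiff by simp
  moreover have "(d - s) \<bullet> E \<ge> -2*z"
  proof -
    have "(1/t) * (r + w \<bullet> E) \<ge> (1/t) * (w \<bullet> E)" using r0 it tpos by (intro mult_left_mono) auto
    moreover have "(1/t) * (w \<bullet> E) \<ge> -2*z"
    proof -
      have "(1/t) * \<bar>w \<bullet> E\<bar> \<le> 2 * z" using it wE by (intro mult_mono) auto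
      moreover have "- \<bar>w \<bullet> E\<bar> / t \<le> (w \<bullet> E) / t"
        using tpos by (intro divide_right_mono) auto
      ultimately show ?thesis by simp
    qed
    ultimately show ?thesis using p1 by linarith
  qed
  moreover have "\<bar>(d - s) \<bullet> Ep\<bar> \<le> 2*z"
  proof -
    have "(1/t) * \<bar>w \<bullet> Ep\<bar> \<le> 2 * z" using it wEp by (intro mult_mono) auto
    then show ?thesis using p2 it tpos by (simp add: abs_mult)
  qed
  moreover have "(d - s) \<bullet> E = (d$1-s$1)*e1 + (d$2-s$2)*e2"
    "(d - s) \<bullet> Ep = (d$2-s$2)*e1 - (d$1-s$1)*e2"
    by (simp_all add: E_def Ep_def inner_vec_def sum_2 algebra_simps)
  ultimately show ?thesis by (simp add: rect_def e1_def e2_def)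
qed



definition K1 :: "real^2 \<Rightarrow> real \<Rightarrow> real^2 \<Rightarrow> real \<Rightarrow> ((real^2) \<times> (real^2)) set" where
  "K1 c R q z = {(s, d). s \<in> cball c R \<and> d \<in> cball c R \<and>
      (\<exists>t\<in>{1/2..1}. dist q ((1-t) *\<^sub>R s + t *\<^sub>R d) \<le> z)}"

lemma K1_compact: "compact (K1 c R q z)"
proof -
  define S where "S = ((cball c R \<times> cball c R) \<times> {1/2..1::real}) \<inter>
     {x. dist q ((1 - snd x) *\<^sub>R fst (fst x) + snd x *\<^sub>R snd (fst x)) \<le> z}"
  have "closed {x::(((real^2) \<times> (real^2)) \<times> real). dist q ((1 - snd x) *\<^sub>R fst (fst x) + snd x *\<^sub>R snd (fst x)) \<le> z}"
    by (intro closed_Collect_le continuous_intros)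
  then have "closed S" unfolding S_def by (intro closed_Int closed_Times) auto
  moreover have "bounded S" unfolding S_def
    by (rule bounded_subset[of "(cball c R \<times> cball c R) \<times> {1/2..1}"]) (auto intro!: bounded_Times)
  ultimately have "compact S" by (simp add: compact_eq_bounded_closed)
  then have "compact (fst ` S)" by (intro compact_continuous_image continuous_intros)
  moreover have "fst ` S = K1 c R q z"
  proof (intro set_eqI iffI)
    fix x assume "x \<in> fst ` S"
    then obtain y where y: "y \<in> S" "x = fst y" by blast
    then show "x \<in> K1 c R q z" unfolding S_def K1_def
      by (cases y) (auto intro!: bexI[of _ "snd y"])
  next
    fix x assume "x \<in> K1 c R q z"
    then obtain s d t where x: "x = (s, d)" "s \<in> cball c R" "d \<in> cball c R" "t \<in> {1/2..1}"
      "dist q ((1-t) *\<^sub>R s + t *\<^sub>R d) \<le> z" unfolding K1_def by blast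
    then have "((s, d), t) \<in> S" unfolding S_def by simp
    then show "x \<in> fst ` S" using x(1) by (metis fst_conv image_eqI)
  qed
  ultimately show ?thesis by simp
qed

lemma K1_slice:
  assumes "R > 0" "z \<ge> 0"
  shows "emeasure (uniform_measure lborel (cball c R)) (Pair s -` K1 c R q z)
          \<le> ennreal ((2*R + 2*z) * (4*z) / (pi * R^2))"
proof (cases "s \<in> cball c R")
  case False
  then have "Pair s -` K1 c R q z = {}" by (auto simp: K1_def)
  then show ?thesis by simp
next
  case True
  let ?M = "uniform_measure lborel (cball c R)"
  let ?r = "rect s (dir1 q s) (dir2 q s) (-2*z) (2*R) (2*z)"
  have rm: "?r \<in> sets lborel" "emeasure lborel ?r = ennreal ((2*R - -2*z) * (2*(2*z)))"
    using rect_measure[OF dir_norm, of "-2*z" "2*R" "2*z" s q s] assms by auto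
  have sub: "Pair s -` K1 c R q z \<subseteq> cball c R \<inter> ?r"
  proof
    fix d assume "d \<in> Pair s -` K1 c R q z"
    then obtain t where "d \<in> cball c R" "s \<in> cball c R" "1/2 \<le> t" "t \<le> 1"
       "dist q ((1-t) *\<^sub>R s + t *\<^sub>R d) \<le> z" by (auto simp: K1_def)
    then show "d \<in> cball c R \<inter> ?r" using slice_sub[of c s R d t q z] by simp
  qed
  have A: "emeasure lborel (cball c R) = ennreal (pi * R^2)"
    using emeasure_cball[of R c] assms by (simp add: unit_ball_vol_2 mult.commute)
  have "emeasure ?M (Pair s -` K1 c R q z) \<le> emeasure ?M (cball c R \<inter> ?r)"
    using sub rm by (intro emeasure_mono) auto
  also have "\<dots> = emeasure lborel (cball c R \<inter> ?r) / emeasure lborel (cball c R)"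
    using rm by (subst emeasure_uniform_measure) (auto simp: Int_absorb1)
  also have "\<dots> \<le> emeasure lborel ?r / emeasure lborel (cball c R)"
    using rm by (intro divide_right_mono_ennreal emeasure_mono) auto
  also have "\<dots> = ennreal ((2*R - -2*z) * (2*(2*z))) / ennreal (pi * R^2)"
    by (simp only: rm(2) A)
  also have "\<dots> = ennreal ((2*R + 2*z) * (4*z) / (pi * R^2))"
  proof -
    have eq: "(2*R - -2*z) * (2*(2*z)) = (2*R + 2*z) * (4*z)" by simp
    show ?thesis unfolding eq using assms by (intro divide_ennreal) auto
  qed
  finally show ?thesis .
qed



lemma K1_swap: "(\<lambda>x. (x, y)) -` ((\<lambda>x. (snd x, fst x)) ` K) = Pair y -` K"
  by (auto simp: image_iff) (metis fst_conv snd_conv)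

theorem lemmaC2:
  fixes n \<gamma> z :: real and c :: "real^2" and A Q :: "(real^2) set"
    and P :: "(real^2) set set"
  assumes "n \<ge> 1" and "\<gamma> \<ge> 0"
    and "A = cball c (n powr \<gamma>)"
    and "z > 0" and "z \<le> n powr \<gamma>"
    and "\<Union>P = A" and "disjoint P"
    and "\<forall>C\<in>P. convex C \<and> diameter C \<le> z"
    and "Q \<in> P"
  shows "\<exists>B \<in> sets (unif_pair A).
           {(s, d). s \<in> A \<and> d \<in> A \<and> closed_segment s d \<inter> Q \<noteq> {}} \<subseteq> B \<and>
           measure (unif_pair A) B \<le> 6 * z / n powr \<gamma>"
proof -
  define R where "R = n powr \<gamma>"
  have R1: "R \<ge> 1" using assms(1,2) by (simp add: R_def ge_one_powr_ge_zero)
  have AR: "A = cball c R" using assms(3) by (simp add: R_def)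
  define q where "q = (if Q = {} then c else (SOME x. x \<in> Q))"
  have Qsub: "Q \<subseteq> cball q z"
  proof (cases "Q = {}")
    case False
    then have qQ: "q \<in> Q" by (simp add: q_def some_in_eq)
    have "Q \<subseteq> A" using assms(6,9) by blast
    then have bQ: "bounded Q" using AR bounded_cball bounded_subset by blast
    have "diameter Q \<le> z" using assms(8,9) by blast
    then show ?thesis using diameter_bounded_bound[OF bQ qQ] by (auto simp: subset_iff) (meson order_trans)
  qed simp
  define M where "M = uniform_measure lborel A"
  have Ameas: "emeasure lborel A = ennreal (pi * R^2)"
    using emeasure_cball[of R c] R1 by (simp add: AR unit_ball_vol_2 mult.commute)
  have pM: "prob_space M" unfolding M_def
    using R1 by (intro prob_space_uniform_measure) (auto simp: Ameas)
  have pMM: "prob_space (M \<Otimes>\<^sub>M M)" using pM by (intro prob_space_pair)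
  have sfM: "sigma_finite_measure M" using pM by (rule prob_space_imp_sigma_finite)
  interpret sf: pair_sigma_finite M M using sfM by (simp add: pair_sigma_finite_def)
  have UP: "unif_pair A = M \<Otimes>\<^sub>M M" by (simp add: unif_pair_def M_def)
  have sets_eq: "sets (M \<Otimes>\<^sub>M M) = sets (borel :: ((real^2) \<times> (real^2)) measure)"
  proof -
    have "sets (M \<Otimes>\<^sub>M M) = sets ((lborel :: (real^2) measure) \<Otimes>\<^sub>M lborel)"
      by (rule sets_pair_measure_cong) (simp_all add: M_def)
    also have "(lborel :: (real^2) measure) \<Otimes>\<^sub>M lborel = lborel" by (rule lborel_prod)
    finally show ?thesis by simp
  qed
  define B1 where "B1 = K1 c R q z"
  define B2 where "B2 = (\<lambda>x. (snd x, fst x)) ` B1"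
  have cB1: "compact B1" unfolding B1_def by (rule K1_compact)
  have cB2: "compact B2" unfolding B2_def using cB1 by (intro compact_continuous_image continuous_intros)
  have sB1: "B1 \<in> sets (M \<Otimes>\<^sub>M M)" unfolding sets_eq using cB1 by (simp add: compact_imp_closed)
  have sB2: "B2 \<in> sets (M \<Otimes>\<^sub>M M)" unfolding sets_eq using cB2 by (simp add: compact_imp_closed)
  define k where "k = (2*R + 2*z) * (4*z) / (pi * R^2)"
  have k0: "k \<ge> 0" using R1 assms(4) by (simp add: k_def)
  have slice: "emeasure M (Pair s -` B1) \<le> ennreal k" for s
    unfolding M_def AR B1_def k_def using R1 assms(4) by (intro K1_slice) auto
  have e1: "emeasure (M \<Otimes>\<^sub>M M) B1 \<le> ennreal k"
  proof -
    have "emeasure (M \<Otimes>\<^sub>M M) B1 = (\<integral>\<^sup>+s. emeasure M (Pair s -` B1) \<partial>M)"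
      by (rule sigma_finite_measure.emeasure_pair_measure_alt[OF sfM sB1])
    also have "\<dots> \<le> (\<integral>\<^sup>+s. ennreal k \<partial>M)" by (intro nn_integral_mono slice)
    also have "\<dots> = ennreal k" using prob_space.emeasure_space_1[OF pM] by simp
    finally show ?thesis .
  qed
  have e2: "emeasure (M \<Otimes>\<^sub>M M) B2 \<le> ennreal k"
  proof -
    have "emeasure (M \<Otimes>\<^sub>M M) B2 = (\<integral>\<^sup>+y. emeasure M ((\<lambda>x. (x, y)) -` B2) \<partial>M)"
      by (rule sf.emeasure_pair_measure_alt2[OF sB2])
    also have "\<dots> = (\<integral>\<^sup>+y. emeasure M (Pair y -` B1) \<partial>M)"
      unfolding B2_def K1_swap ..
    also have "\<dots> \<le> (\<integral>\<^sup>+s. ennreal k \<partial>M)" by (intro nn_integral_mono slice)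
    also have "\<dots> = ennreal k" using prob_space.emeasure_space_1[OF pM] by simp
    finally show ?thesis .
  qed
  have "emeasure (M \<Otimes>\<^sub>M M) (B1 \<union> B2) \<le> ennreal k + ennreal k"
    using emeasure_subadditive[OF sB1 sB2] e1 e2 by (meson add_mono order_trans)
  then have m2: "measure (M \<Otimes>\<^sub>M M) (B1 \<union> B2) \<le> 2 * k"
    using k0 unfolding measure_def by (intro enn2real_leI) (auto simp: ennreal_plus[symmetric])
  have m1: "measure (M \<Otimes>\<^sub>M M) (B1 \<union> B2) \<le> 1" by (rule prob_space.prob_le_1[OF pMM])
  have mB: "measure (M \<Otimes>\<^sub>M M) (B1 \<union> B2) \<le> 6 * z / R"
  proof (cases "6 * z \<le> R")
    case True
    have pi: "(157/50) \<le> pi"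
      by (rule order_trans[OF _ pi_approx(1)]) simp
    have "2 * k = 8 * z * (2*R + 2*z) / (pi * R^2)" by (simp add: k_def)
    also have "\<dots> \<le> 6 * z / R"
    proof -
      have "8 * (2*R + 2*z) \<le> 6 * pi * R" 
      proof -
        have "(157/50) * R \<le> pi * R" using pi R1 by (intro mult_right_mono) auto
        moreover have "6 * pi * R = 6 * (pi * R)" by simp
        moreover have "8 * (2*R + 2*z) = 16*R + 16*z" by simp
        ultimately show ?thesis using True R1 by linarith
      qed
      then have "8 * z * (2*R + 2*z) * R \<le> 6 * z * (pi * R^2)"
        using assms(4) R1 by (simp add: power2_eq_square)
      then show ?thesis using R1 pi by (simp add: divide_simps)
    qed
    finally show ?thesis using m2 by linarith
  next
    case False
    then have "1 \<le> 6 * z / R" using R1 by (simp add: divide_simps)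
    then show ?thesis using m1 by linarith
  qed
  have hit: "{(s, d). s \<in> A \<and> d \<in> A \<and> closed_segment s d \<inter> Q \<noteq> {}} \<subseteq> B1 \<union> B2"
  proof (intro subsetI)
    fix p assume "p \<in> {(s, d). s \<in> A \<and> d \<in> A \<and> closed_segment s d \<inter> Q \<noteq> {}}"
    then obtain s d where p: "p = (s, d)" and s: "s \<in> A" and d: "d \<in> A"
      and ne: "closed_segment s d \<inter> Q \<noteq> {}" by blast
    show "p \<in> B1 \<union> B2"
    proof (cases "(s, d) \<in> B1")
      case True then show ?thesis using p by simp
    next
      case False
      then have nB1: "(s, d) \<notin> B1" .
    obtain x where x: "x \<in> closed_segment s d" "x \<in> Q" using ne by blast
    then obtain u where u: "0 \<le> u" "u \<le> 1" "x = (1 - u) *\<^sub>R s + u *\<^sub>R d"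
      by (auto simp: closed_segment_def)
    have xq: "dist q x \<le> z" using Qsub x(2) by auto
    have "(s, d) \<in> B2"
    proof (cases "1/2 \<le> u")
      case True
      then have "(s, d) \<in> B1" using s d u xq by (auto simp: B1_def K1_def AR)
      then show ?thesis using nB1 by simp
    next
      case False
      have "(1 - (1 - u)) *\<^sub>R d + (1 - u) *\<^sub>R s = x" using u by (simp add: algebra_simps)
      then have "dist q ((1 - (1 - u)) *\<^sub>R d + (1 - u) *\<^sub>R s) \<le> z" using xq by simp
      moreover have "1 - u \<in> {1/2..1}" using u False by auto
      ultimately have "(d, s) \<in> B1" using s d unfolding B1_def K1_def AR by blast
      then show ?thesis unfolding B2_def by (auto simp: image_iff intro!: bexI[of _ "(d, s)"])
    qed
    then show ?thesis using p by simp
    qed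
  qed
  show ?thesis
    using hit mB sB1 sB2 unfolding UP R_def by (intro bexI[of _ "B1 \<union> B2"]) auto
qed

end
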